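(* Let $(\Psi,\vec u,E)$ be a GCD-to-DIV triple with witnessing variable families $\vec z,\vec y,\vec w$. If $\Psi$ is not in increasing form (for any order), then there is a non-constant polynomial $f$ that is the primitive part of a left-hand side of a divisibility of $\Psi$ such that $M_f(\Psi)\cap\mathbb Z\ne\{0\}$ (here $\mathbb Z$ denotes the constant polynomials). If $\Psi$ is in increasing form, then $\Psi$ is in increasing form for every total order in which all variables of $\vec z$ precede all variables of $\vec y$, which precede all variables of $\vec w$ (i.e. $\Psi$ is $3$-increasing with partition $\vec z,\vec y,\vec w$).
   Context: For integers $a\mid b$ means there is a unique $q$ with $b=qa$. A system of divisibility constraints is $\bigwedge_i f_i\mid g_i$ with linear integer polynomials $f_i\neq0$. A linear polynomial is primitive if non-zero with coefficients and constant having gcd $1$; the primitive part of non-zero $g$ is the primitive $f$ with $g=\gcd(g)f$; $\mathbb Zf=\{bf:b\in\mathbb Z\}$. GCD-to-DIV triple: $(\Psi,\vec u,E)$ such that there are $d,m\in\mathbb N$ and three disjoint families of variables $\vec z,\vec y,\vec w$ with: (1) $\Psi(\vec z,\vec y,\vec w)$ is a system of divisibility constraints in $m$ variables, $\vec u\in\mathbb Z^d$, $E\in\mathbb Z^{d\times m}$, each column of $E$ corresponding to a variable of $\Psi$; (2) each divisibility of $\Psi$ has the form $h(\vec z)\mid f(\vec y)$ or $f(\vec y)\mid g(\vec w)$ with $g$ non-constant, all polynomials have only non-negative coefficients and constants, and every left-hand side has a strictly positive constant; (3) each variable $z$ of $\vec z$ appears in a single polynomial of $\Psi$, which has the form $z+c$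 with $c$ a positive integer and occurs in exactly two divisibilities (as left-hand side); (4) each variable $w$ of $\vec w$ appears in exactly two polynomials, of the forms $w$ and $w+c$ with $c$ a positive integer, each occurring exactly once in $\Psi$ (as right-hand sides); (5) every column of $E$ corresponding to a variable of $\vec z$ or $\vec w$ is zero. For primitive $f$, $M_f(\Psi)$ is the smallest set of linear polynomials containing $f$, closed under integer linear combinations, and such that whenever $g\mid h$ is a constraint of $\Psi$ and $bg\in M_f(\Psi)$ for some $b\in\mathbb Z$, then $bh\in M_f(\Psi)$. For a total order $x_1\preceq\dots\preceq x_n$, $\mathrm{lv}(f)$ is the largest variable with non-zero coefficient; $\Psi$ is in increasing form for $\preceq$ if for every $k$ and primitive $f$ with $\mathrm{lv}(f)=x_k$, $M_f(\Psi)\cap\mathbb Z[x_1,\dots,x_k]=\mathbb Zf$; $\Psi$ is in increasing form if it is so for some total order. *)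

theory Defs
  imports Main
begin

text \<open>A linear integer polynomial in the variables 0,1,2,... (natural numbers) is a pair
  (coefficient function, constant).  The polynomial (a, c) denotes sum_i a i * x_i + c.\<close>

type_synonym lin = "(nat \<Rightarrow> int) \<times> int"

definition lin_zero :: lin where
  "lin_zero = (\<lambda>_. 0, 0)"

definition lin_add :: "lin \<Rightarrow> lin \<Rightarrow> lin" where
  "lin_add p q = (\<lambda>i. fst p i + fst q i, snd p + snd q)"

definition lin_smult :: "int \<Rightarrow> lin \<Rightarrow> lin" where
  "lin_smult a p = (\<lambda>i. a * fst p i, a * snd p)"

definition lin_const :: "int \<Rightarrow> lin" where
  "lin_const c = (\<lambda>_. 0, c)"

definition lin_var_plus :: "nat \<Rightarrow> int \<Rightarrow> lin" where
  "lin_var_plus x c = (\<lambda>i. if i = x then 1 else 0, c)"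

definition lin_var :: "nat \<Rightarrow> lin" where
  "lin_var x = lin_var_plus x 0"

definition lvars :: "lin \<Rightarrow> nat set" where
  "lvars p = {i. fst p i \<noteq> 0}"

definition lin_over :: "nat set \<Rightarrow> lin \<Rightarrow> bool" where
  "lin_over V p \<longleftrightarrow> lvars p \<subseteq> V"

definition lin_content :: "lin \<Rightarrow> int" where
  "lin_content p = Gcd (insert (snd p) (range (fst p)))"

definition primitive :: "lin \<Rightarrow> bool" where
  "primitive p \<longleftrightarrow> p \<noteq> lin_zero \<and> lin_content p = 1"

definition primitive_part_of :: "lin \<Rightarrow> lin \<Rightarrow> bool" where
  "primitive_part_of f g \<longleftrightarrow> g \<noteq> lin_zero \<and> primitive f \<and> g = lin_smult (lin_content g) f"

definition nonneg_lin :: "lin \<Rightarrow> bool" where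
  "nonneg_lin p \<longleftrightarrow> (\<forall>i. fst p i \<ge> 0) \<and> snd p \<ge> 0"

text \<open>A system is a list of constraints (f, g) meaning f | g.\<close>
type_synonym system = "(lin \<times> lin) list"

definition div_system :: "system \<Rightarrow> bool" where
  "div_system \<Psi> \<longleftrightarrow> (\<forall>(f, g) \<in> set \<Psi>. f \<noteq> lin_zero)"

definition occ_count :: "system \<Rightarrow> lin \<Rightarrow> nat" where
  "occ_count \<Psi> p = length (filter (\<lambda>(l, r). l = p \<or> r = p) \<Psi>)"

definition polys_of :: "system \<Rightarrow> lin set" where
  "polys_of \<Psi> = fst ` set \<Psi> \<union> snd ` set \<Psi>"

text \<open>The variables of \<Psi> are 0..m-1, partitioned into Z (the z's), Y (the y's), W (the w's);
  u is a vector of length d (entries u 0 .. u (d-1)); E is a d x m matrix (E i j, i<d, j<m).\<close>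

definition gcd_to_div :: "system \<Rightarrow> (nat \<Rightarrow> int) \<Rightarrow> (nat \<Rightarrow> nat \<Rightarrow> int) \<Rightarrow> nat \<Rightarrow> nat
    \<Rightarrow> nat set \<Rightarrow> nat set \<Rightarrow> nat set \<Rightarrow> bool" where
  "gcd_to_div \<Psi> u E d m Z Y W \<longleftrightarrow>
     \<comment> \<open>(1)\<close>
     div_system \<Psi> \<and>
     Z \<inter> Y = {} \<and> Z \<inter> W = {} \<and> Y \<inter> W = {} \<and> Z \<union> Y \<union> W = {..<m} \<and>
     (\<forall>p \<in> polys_of \<Psi>. lin_over {..<m} p) \<and>
     \<comment> \<open>(2)\<close>
     (\<forall>(l, r) \<in> set \<Psi>.
        ((lin_over Z l \<and> lin_over Y r) \<or> (lin_over Y l \<and> lin_over W r \<and> lvars r \<noteq> {})) \<and>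
        nonneg_lin l \<and> nonneg_lin r \<and> snd l > 0) \<and>
     \<comment> \<open>(3)\<close>
     (\<forall>x \<in> Z. \<exists>c > 0.
        (\<forall>p \<in> polys_of \<Psi>. x \<in> lvars p \<longrightarrow> p = lin_var_plus x c) \<and>
        occ_count \<Psi> (lin_var_plus x c) = 2 \<and>
        (\<forall>(l, r) \<in> set \<Psi>. r \<noteq> lin_var_plus x c)) \<and>
     \<comment> \<open>(4)\<close>
     (\<forall>x \<in> W. \<exists>c > 0.
        (\<forall>p \<in> polys_of \<Psi>. x \<in> lvars p \<longrightarrow> p = lin_var x \<or> p = lin_var_plus x c) \<and>
        occ_count \<Psi> (lin_var x) = 1 \<and> occ_count \<Psi> (lin_var_plus x c) = 1 \<and>
        (\<forall>(l, r) \<in> set \<Psi>. l \<noteq> lin_var x \<and> l \<noteq> lin_var_plus x c)) \<and>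
     \<comment> \<open>(5)\<close>
     (\<forall>i < d. \<forall>j \<in> Z \<union> W. E i j = 0)"

inductive_set Mset :: "system \<Rightarrow> lin \<Rightarrow> lin set" for \<Psi> :: system and f :: lin where
  base: "f \<in> Mset \<Psi> f"
| lincomb: "p \<in> Mset \<Psi> f \<Longrightarrow> q \<in> Mset \<Psi> f \<Longrightarrow>
     lin_add (lin_smult a p) (lin_smult b q) \<in> Mset \<Psi> f"
| propagate: "(g, h) \<in> set \<Psi> \<Longrightarrow> lin_smult b g \<in> Mset \<Psi> f \<Longrightarrow> lin_smult b h \<in> Mset \<Psi> f"

text \<open>A total order on the variables 0..m-1 is given by a rank function r, a bijection
  of {..<m} onto itself: x precedes y iff r x \<le> r y.\<close>
definition var_order :: "nat \<Rightarrow> (nat \<Rightarrow> nat) \<Rightarrow> bool" where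
  "var_order m r \<longleftrightarrow> bij_betw r {..<m} {..<m}"

definition leading_var :: "(nat \<Rightarrow> nat) \<Rightarrow> lin \<Rightarrow> nat \<Rightarrow> bool" where
  "leading_var r f x \<longleftrightarrow> x \<in> lvars f \<and> (\<forall>y \<in> lvars f. r y \<le> r x)"

definition increasing_for :: "system \<Rightarrow> nat \<Rightarrow> (nat \<Rightarrow> nat) \<Rightarrow> bool" where
  "increasing_for \<Psi> m r \<longleftrightarrow>
     (\<forall>f x. lin_over {..<m} f \<and> primitive f \<and> leading_var r f x \<longrightarrow>
        {p \<in> Mset \<Psi> f. lin_over {j. j < m \<and> r j \<le> r x} p} = {lin_smult b f | b. True})"

definition increasing :: "system \<Rightarrow> nat \<Rightarrow> bool" where
  "increasing \<Psi> m \<longleftrightarrow> (\<exists>r. var_order m r \<and> increasing_for \<Psi> m r)"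

end

theory Submission
  imports Defs
begin

lemma lin_eq_iff: "(p::lin) = q \<longleftrightarrow> (\<forall>i. fst p i = fst q i) \<and> snd p = snd q"
  by (auto simp: prod_eq_iff fun_eq_iff)

lemma lin_simps[simp]:
  "fst (lin_smult a p) i = a * fst p i" "snd (lin_smult a p) = a * snd p"
  "fst (lin_add p q) i = fst p i + fst q i" "snd (lin_add p q) = snd p + snd q"
  "fst lin_zero i = 0" "snd lin_zero = 0"
  "fst (lin_const c) i = 0" "snd (lin_const c) = c"
  by (auto simp: lin_smult_def lin_add_def lin_zero_def lin_const_def)

lemma lvars_const[simp]: "lvars (lin_const c) = {}"
  by (simp add: lvars_def)

lemma smult_in_M: "lin_smult b f \<in> Mset \<Psi> f"
proof -
  have "lin_add (lin_smult b f) (lin_smult 0 f) \<in> Mset \<Psi> f"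
    by (rule Mset.lincomb) (auto intro: Mset.base)
  moreover have "lin_add (lin_smult b f) (lin_smult 0 f) = lin_smult b f"
    by (simp add: lin_eq_iff)
  ultimately show ?thesis by simp
qed

lemma M_scale:
  assumes "lin_smult k f \<in> Mset \<Psi> f'"
  shows "p \<in> Mset \<Psi> f \<Longrightarrow> lin_smult k p \<in> Mset \<Psi> f'"
proof (induction p rule: Mset.induct)
  case base
  then show ?case using assms by simp
next
  case (lincomb p q a b)
  have "lin_add (lin_smult a (lin_smult k p)) (lin_smult b (lin_smult k q)) \<in> Mset \<Psi> f'"
    using lincomb by (intro Mset.lincomb)
  moreover have "lin_add (lin_smult a (lin_smult k p)) (lin_smult b (lin_smult k q))
      = lin_smult k (lin_add (lin_smult a p) (lin_smult b q))"
    by (simp add: lin_eq_iff algebra_simps)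
  ultimately show ?case by simp
next
  case (propagate g h b)
  have "lin_smult k (lin_smult b g) = lin_smult (k*b) g"
    by (simp add: lin_eq_iff algebra_simps)
  with propagate have "lin_smult (k*b) h \<in> Mset \<Psi> f'"
    by (intro Mset.propagate[of g h]) auto
  moreover have "lin_smult k (lin_smult b h) = lin_smult (k*b) h"
    by (simp add: lin_eq_iff algebra_simps)
  ultimately show ?case by simp
qed

lemma M_sub:
  assumes step: "\<And>g h b k p. (g,h) \<in> set \<Psi> \<Longrightarrow> lin_smult b g \<in> Mset \<Psi> f \<Longrightarrow> lvars p \<subseteq> S \<Longrightarrow>
      lin_smult b g = lin_add (lin_smult k f) p \<Longrightarrow>
      \<exists>k' p'. lvars p' \<subseteq> S \<and> lin_smult b h = lin_add (lin_smult k' f) p'"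
  shows "e \<in> Mset \<Psi> f \<Longrightarrow> \<exists>k p. lvars p \<subseteq> S \<and> e = lin_add (lin_smult k f) p"
proof (induction e rule: Mset.induct)
  case base
  show ?case
    by (rule exI[of _ 1], rule exI[of _ lin_zero]) (simp add: lvars_def lin_eq_iff)
next
  case (lincomb p q a b)
  then obtain k1 p1 k2 p2 where h: "lvars p1 \<subseteq> S" "p = lin_add (lin_smult k1 f) p1"
    "lvars p2 \<subseteq> S" "q = lin_add (lin_smult k2 f) p2" by blast
  have "lvars (lin_add (lin_smult a p1) (lin_smult b p2)) \<subseteq> lvars p1 \<union> lvars p2"
    by (auto simp: lvars_def)
  then have "lvars (lin_add (lin_smult a p1) (lin_smult b p2)) \<subseteq> S" using h by blast
  moreover have "lin_add (lin_smult a p) (lin_smult b q) = lin_add (lin_smult (a*k1+b*k2) f) (lin_add (lin_smult a p1) (lin_smult b p2))"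
    using h by (simp add: lin_eq_iff algebra_simps)
  ultimately show ?case by blast
next
  case (propagate g h b)
  then show ?case using step by blast
qed

lemma G:
  assumes sub: "\<exists>k p. lvars p \<subseteq> S \<and> e = lin_add (lin_smult k f) p"
    and noc: "\<forall>d. lin_const d \<in> Mset \<Psi> f \<longrightarrow> d = 0"
    and S: "\<forall>s\<in>S. fst f s = 0 \<and> s \<notin> V"
    and e: "e \<in> Mset \<Psi> f" "lvars e \<subseteq> V"
  shows "\<exists>b. e = lin_smult b f"
proof -
  obtain k p where kp: "lvars p \<subseteq> S" "e = lin_add (lin_smult k f) p" using sub by blast
  have p0: "fst p i = 0" for i
  proof (cases "i \<in> S")
    case True
    then have "fst e i = 0" using S e(2) by (auto simp: lvars_def)
    then show ?thesis using kp S True by simp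
  next
    case False then show ?thesis using kp(1) by (auto simp: lvars_def)
  qed
  have "lin_add (lin_smult 1 e) (lin_smult (-k) f) \<in> Mset \<Psi> f"
    using e by (intro Mset.lincomb Mset.base)
  moreover have "lin_add (lin_smult 1 e) (lin_smult (-k) f) = lin_const (snd p)"
    using kp p0 by (simp add: lin_eq_iff)
  ultimately have "snd p = 0" using noc by auto
  then have "e = lin_smult k f" using kp p0 by (simp add: lin_eq_iff)
  then show ?thesis by blast
qed

lemma prim_part_exists:
  assumes "g \<noteq> lin_zero"
  shows "\<exists>f'. primitive_part_of f' g"
proof -
  define c where "c = lin_content g"
  define f' where "f' = ((\<lambda>i. fst g i div c), snd g div c)"
  define A where "A = insert (snd g) (range (fst g))"
  have cA: "c = Gcd A" by (simp add: c_def A_def lin_content_def)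
  have dv: "c dvd a" if "a \<in> A" for a using that cA by simp
  have "\<not> A \<subseteq> {0}" using assms by (auto simp: A_def lin_eq_iff)
  then have c0: "c \<noteq> 0" using cA by simp
  have cnn: "c \<ge> 0" using cA by simp
  have gf: "g = lin_smult c f'"
    using dv by (auto simp: lin_eq_iff f'_def A_def)
  define B where "B = insert (snd f') (range (fst f'))"
  have AB: "A = (*) c ` B"
  proof -
    have e1: "snd g = c * snd f'" using gf by (metis lin_simps(2))
    have e2: "fst g = (\<lambda>i. c * fst f' i)" using gf by (metis lin_simps(1))
    show ?thesis unfolding A_def B_def image_insert image_image e1 e2 by simp
  qed
  have "Gcd A = normalize (c * Gcd B)" unfolding AB by (rule Gcd_mult)
  then have "Gcd A = \<bar>c * Gcd B\<bar>" by simp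
  then have "c = \<bar>c\<bar> * Gcd B" unfolding cA[symmetric] by (simp add: abs_mult)
  then have "c = c * Gcd B" using cnn by simp
  then have "Gcd B = 1" using c0 by simp
  then have "primitive f'"
    using gf assms by (auto simp: primitive_def lin_content_def B_def lin_eq_iff)
  moreover have "g = lin_smult (lin_content g) f'" unfolding c_def[symmetric] by (rule gf)
  ultimately have "primitive_part_of f' g" using assms unfolding primitive_part_of_def by blast
  then show ?thesis by blast
qed

lemma lvars_smult: "a \<noteq> 0 \<Longrightarrow> lvars (lin_smult a p) = lvars p"
  by (auto simp: lvars_def)

definition Cprop :: "system \<Rightarrow> bool" where
  "Cprop \<Psi> \<longleftrightarrow> (\<exists>f l r. (l, r) \<in> set \<Psi> \<and> primitive_part_of f l \<and> lvars f \<noteq> {} \<and>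
                     (\<exists>c. c \<noteq> 0 \<and> lin_const c \<in> Mset \<Psi> f))"

lemma L1:
  assumes gd: "gcd_to_div \<Psi> u E d m Z Y W" and inc: "increasing \<Psi> m"
  shows "\<not> Cprop \<Psi>"
proof
  assume "Cprop \<Psi>"
  then obtain f l r c where h: "(l, r) \<in> set \<Psi>" "primitive_part_of f l" "lvars f \<noteq> {}"
    "c \<noteq> 0" "lin_const c \<in> Mset \<Psi> f" unfolding Cprop_def by blast
  obtain r0 where r0: "var_order m r0" "increasing_for \<Psi> m r0" using inc increasing_def by blast
  have lc: "l = lin_smult (lin_content l) f" "l \<noteq> lin_zero" using h(2) primitive_part_of_def by auto
  have "lin_content l \<noteq> 0"
  proof
    assume "lin_content l = 0"
    then have "l = lin_zero" using lc(1) by (simp add: lin_eq_iff)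
    then show False using lc(2) by simp
  qed
  then have lv: "lvars f = lvars l" using lc(1) lvars_smult by metis
  have "l \<in> polys_of \<Psi>" using h(1) by (force simp: polys_of_def)
  then have "lin_over {..<m} l" using gd unfolding gcd_to_div_def by auto
  then have lo: "lin_over {..<m} f" using lv by (simp add: lin_over_def)
  then have fin: "finite (lvars f)" by (auto simp: lin_over_def intro: finite_subset)
  obtain x where x: "x \<in> lvars f" "\<forall>y\<in>lvars f. r0 y \<le> r0 x"
  proof -
    have "Max (r0 ` lvars f) \<in> r0 ` lvars f" using fin h(3) by (intro Max_in) auto
    then obtain x where "x \<in> lvars f" "r0 x = Max (r0 ` lvars f)" by auto
    moreover have "\<forall>y\<in>lvars f. r0 y \<le> r0 x" using fin calculation by auto
    ultimately show ?thesis using that by blast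
  qed
  have "primitive f" using h(2) primitive_part_of_def by auto
  then have eqs: "{p \<in> Mset \<Psi> f. lin_over {j. j < m \<and> r0 j \<le> r0 x} p} = {lin_smult b f | b. True}"
  proof -
    have "lin_over {..<m} f \<and> primitive f \<and> leading_var r0 f x"
      using lo x \<open>primitive f\<close> by (simp add: leading_var_def)
    then show ?thesis using r0(2) unfolding increasing_for_def by blast
  qed
  have "lin_const c \<in> {p \<in> Mset \<Psi> f. lin_over {j. j < m \<and> r0 j \<le> r0 x} p}"
    using h(5) by (simp add: lin_over_def)
  then have "lin_const c \<in> {lin_smult b f | b. True}" using eqs by simp
  then obtain b where "lin_const c = lin_smult b f" by auto
  then have "0 = b * fst f x" "c = b * snd f" by (metis lin_simps)+
  then show False using x(1) h(4) by (auto simp: lvars_def)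
qed


lemma lvars_smult_sub: "lvars (lin_smult a p) \<subseteq> lvars p"
  by (auto simp: lvars_def)

lemma M_par:
  assumes nP: "\<not> (\<exists>g h b k. (g,h) \<in> set \<Psi> \<and> b \<noteq> 0 \<and> lin_smult b g = lin_smult k f)"
  shows "e \<in> Mset \<Psi> f \<Longrightarrow> \<exists>b. e = lin_smult b f"
proof (induction e rule: Mset.induct)
  case base
  show ?case by (rule exI[of _ 1]) (simp add: lin_eq_iff)
next
  case (lincomb p q a b)
  then obtain b1 b2 where "p = lin_smult b1 f" "q = lin_smult b2 f" by blast
  then have "lin_add (lin_smult a p) (lin_smult b q) = lin_smult (a*b1+b*b2) f"
    by (simp add: lin_eq_iff algebra_simps)
  then show ?case by blast
next
  case (propagate g h b)
  then obtain k where "lin_smult b g = lin_smult k f" by blast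
  then have "b = 0" using nP propagate(1) by blast
  then have "lin_smult b h = lin_smult 0 f" by (simp add: lin_eq_iff)
  then show ?case by blast
qed

lemma L2:
  assumes gd: "gcd_to_div \<Psi> u E d m Z Y W" and nc: "\<not> Cprop \<Psi>"
    and vo: "var_order m r"
    and oZY: "\<forall>z \<in> Z. \<forall>y \<in> Y. r z < r y"
    and oYW: "\<forall>y \<in> Y. \<forall>w \<in> W. r y < r w"
    and oZW: "\<forall>z \<in> Z. \<forall>w \<in> W. r z < r w"
  shows "increasing_for \<Psi> m r"
  unfolding increasing_for_def
proof (intro allI impI)
  fix f x assume A: "lin_over {..<m} f \<and> primitive f \<and> leading_var r f x"
  define V where "V = {j. j < m \<and> r j \<le> r x}"
  have xf: "x \<in> lvars f" "\<forall>y\<in>lvars f. r y \<le> r x" using A by (auto simp: leading_var_def)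
  have fV: "lvars f \<subseteq> V" using A xf by (auto simp: V_def lin_over_def)
  have fx: "fst f x \<noteq> 0" using xf by (simp add: lvars_def)
  have dz: "Z \<inter> Y = {}" "Z \<inter> W = {}" "Y \<inter> W = {}" and ds: "div_system \<Psi>"
    using gd by (auto simp: gcd_to_div_def)
  have tp: "\<And>l h. (l,h) \<in> set \<Psi> \<Longrightarrow>
      ((lin_over Z l \<and> lin_over Y h) \<or> (lin_over Y l \<and> lin_over W h \<and> lvars h \<noteq> {})) \<and> snd l > 0"
    using gd unfolding gcd_to_div_def by fastforce
  have key: "\<exists>b. e = lin_smult b f" if e: "e \<in> Mset \<Psi> f" "lvars e \<subseteq> V" for e
  proof (cases "\<exists>g h b k. (g,h) \<in> set \<Psi> \<and> b \<noteq> 0 \<and> lin_smult b g = lin_smult k f")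
    case False
    then show ?thesis using M_par e(1) by blast
  next
    case True
    then obtain g h b k where gh: "(g,h) \<in> set \<Psi>" "b \<noteq> 0" "lin_smult b g = lin_smult k f" by blast
    have g0: "g \<noteq> lin_zero" using ds gh(1) by (auto simp: div_system_def)
    have k0: "k \<noteq> 0"
    proof
      assume "k = 0"
      then have "lin_smult b g = lin_zero" using gh(3) by (simp add: lin_eq_iff)
      then have "g = lin_zero" using gh(2) by (simp add: lin_eq_iff)
      then show False using g0 by simp
    qed
    have lvg: "lvars g = lvars f" using gh(3) lvars_smult[OF gh(2)] lvars_smult[OF k0] by metis
    have noc: "\<forall>d. lin_const d \<in> Mset \<Psi> f \<longrightarrow> d = 0"
    proof (intro allI impI)
      fix dd assume dd: "lin_const dd \<in> Mset \<Psi> f"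
      obtain f' where f': "primitive_part_of f' g" using prim_part_exists[OF g0] by blast
      have gc: "g = lin_smult (lin_content g) f'" using f' by (simp add: primitive_part_of_def)
      have cg0: "lin_content g \<noteq> 0"
      proof
        assume "lin_content g = 0"
        then have "g = lin_zero" using gc by (simp add: lin_eq_iff)
        then show False using g0 by simp
      qed
      have "lvars f' = lvars g" using gc lvars_smult[OF cg0] by metis
      then have lf': "lvars f' \<noteq> {}" using lvg xf by auto
      have "lin_smult k f = lin_smult (b * lin_content g) f'"
        using gh(3) gc by (simp add: lin_eq_iff algebra_simps)
      then have "lin_smult k f \<in> Mset \<Psi> f'" using smult_in_M by metis
      from M_scale[OF this dd] have "lin_smult k (lin_const dd) \<in> Mset \<Psi> f'" .
      moreover have "lin_smult k (lin_const dd) = lin_const (k*dd)" by (simp add: lin_eq_iff)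
      ultimately have "lin_const (k*dd) \<in> Mset \<Psi> f'" by simp
      then have "k * dd = 0" using nc f' lf' gh(1) unfolding Cprop_def by blast
      then show "dd = 0" using k0 by simp
    qed
    have "lin_over Z g \<or> lin_over Y g" using tp[OF gh(1)] by blast
    then show ?thesis
    proof
      assume "lin_over Z g"
      then have fZ: "lvars f \<subseteq> Z" using lvg by (simp add: lin_over_def)
      then have xZ: "x \<in> Z" using xf by auto
      have sub: "\<exists>k p. lvars p \<subseteq> Y \<union> W \<and> e = lin_add (lin_smult k f) p"
      proof (rule M_sub[OF _ e(1)])
        fix g' h' b' k' p'
        assume "(g', h') \<in> set \<Psi>"
        then have "lin_over Y h' \<or> lin_over W h'" using tp by blast
        then have "lvars (lin_smult b' h') \<subseteq> Y \<union> W"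
          using lvars_smult_sub[of b' h'] by (auto simp: lin_over_def)
        moreover have "lin_smult b' h' = lin_add (lin_smult 0 f) (lin_smult b' h')"
          by (simp add: lin_eq_iff)
        ultimately show "\<exists>k' p'. lvars p' \<subseteq> Y \<union> W \<and> lin_smult b' h' = lin_add (lin_smult k' f) p'"
          by blast
      qed
      have S: "\<forall>s\<in>Y \<union> W. fst f s = 0 \<and> s \<notin> V"
      proof
        fix s assume s: "s \<in> Y \<union> W"
        then have "s \<notin> lvars f" using fZ dz by auto
        moreover have "r x < r s" using s xZ oZY oZW by auto
        ultimately show "fst f s = 0 \<and> s \<notin> V" by (auto simp: lvars_def V_def)
      qed
      show ?thesis by (rule G[OF sub noc S e])
    next
      assume "lin_over Y g"
      then have fY: "lvars f \<subseteq> Y" using lvg by (simp add: lin_over_def)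
      then have xY: "x \<in> Y" using xf by auto
      have sub: "\<exists>k p. lvars p \<subseteq> W \<and> e = lin_add (lin_smult k f) p"
      proof (rule M_sub[OF _ e(1)])
        fix g' h' b' k' p'
        assume gh': "(g', h') \<in> set \<Psi>" and inM: "lin_smult b' g' \<in> Mset \<Psi> f"
          and pW: "lvars p' \<subseteq> W" and eq: "lin_smult b' g' = lin_add (lin_smult k' f) p'"
        show "\<exists>k' p'. lvars p' \<subseteq> W \<and> lin_smult b' h' = lin_add (lin_smult k' f) p'"
        proof (cases "lin_over W h'")
          case True
          then have "lvars (lin_smult b' h') \<subseteq> W"
            using lvars_smult_sub[of b' h'] by (auto simp: lin_over_def)
          moreover have "lin_smult b' h' = lin_add (lin_smult 0 f) (lin_smult b' h')"
            by (simp add: lin_eq_iff)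
          ultimately show ?thesis by blast
        next
          case False
          then have gZ: "lin_over Z g'" and sp: "snd g' > 0" using tp[OF gh'] by auto
          have c0: "b' * fst g' i = 0" for i
          proof (cases "i \<in> lvars g'")
            case True
            then have iZ: "i \<in> Z" using gZ by (auto simp: lin_over_def)
            then have "fst f i = 0" using fY dz by (auto simp: lvars_def)
            moreover have "fst p' i = 0" using iZ pW dz by (auto simp: lvars_def)
            ultimately show ?thesis using eq by (metis lin_simps(1,3) add_0 mult_zero_right)
          next
            case False then show ?thesis by (simp add: lvars_def)
          qed
          have "lin_smult b' g' = lin_const (b' * snd g')" using c0 by (simp add: lin_eq_iff)
          then have "b' * snd g' = 0" using noc inM by metis
          then have "b' = 0" using sp by simp
          then have "lin_smult b' h' = lin_add (lin_smult 0 f) lin_zero" by (simp add: lin_eq_iff)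
          moreover have "lvars lin_zero \<subseteq> W" by (simp add: lvars_def)
          ultimately show ?thesis by blast
        qed
      qed
      have S: "\<forall>s\<in>W. fst f s = 0 \<and> s \<notin> V"
      proof
        fix s assume s: "s \<in> W"
        then have "s \<notin> lvars f" using fY dz by auto
        moreover have "r x < r s" using s xY oYW by auto
        ultimately show "fst f s = 0 \<and> s \<notin> V" by (auto simp: lvars_def V_def)
      qed
      show ?thesis by (rule G[OF sub noc S e])
    qed
  qed
  show "{p \<in> Mset \<Psi> f. lin_over {j. j < m \<and> r j \<le> r x} p} = {lin_smult b f |b. True}"
  proof (intro equalityI subsetI)
    fix p assume "p \<in> {p \<in> Mset \<Psi> f. lin_over {j. j < m \<and> r j \<le> r x} p}"
    then have pM: "p \<in> Mset \<Psi> f" and "lin_over {j. j < m \<and> r j \<le> r x} p" by auto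
    then have "lvars p \<subseteq> V" unfolding lin_over_def V_def by simp
    then obtain b where "p = lin_smult b f" using key pM by blast
    then show "p \<in> {lin_smult b f |b. True}" by blast
  next
    fix p assume "p \<in> {lin_smult b f |b. True}"
    then obtain b where "p = lin_smult b f" by auto
    have "lvars p \<subseteq> V" using \<open>p = lin_smult b f\<close> lvars_smult_sub[of b f] fV by simp
    then have "lin_over {j. j < m \<and> r j \<le> r x} p" unfolding lin_over_def V_def by simp
    moreover have "p \<in> Mset \<Psi> f" using \<open>p = lin_smult b f\<close> smult_in_M by simp
    ultimately show "p \<in> {p \<in> Mset \<Psi> f. lin_over {j. j < m \<and> r j \<le> r x} p}" by simp
  qed
qed

lemma order_exists:
  assumes d: "Z \<inter> Y = {}" "Z \<inter> W = {}" "Y \<inter> W = {}" and u: "Z \<union> Y \<union> W = {..<(m::nat)}"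
  shows "\<exists>r. var_order m r \<and> (\<forall>z\<in>Z. \<forall>y\<in>Y. r z < r y) \<and> (\<forall>y\<in>Y. \<forall>w\<in>W. r y < r w)
           \<and> (\<forall>z\<in>Z. \<forall>w\<in>W. r z < r w)"
proof -
  have fin: "finite Z" "finite Y" "finite W" using u by (metis finite_Un finite_lessThan)+
  define LZ where "LZ = sorted_list_of_set Z"
  define LY where "LY = sorted_list_of_set Y"
  define LW where "LW = sorted_list_of_set W"
  define L where "L = LZ @ LY @ LW"
  have sets: "set LZ = Z" "set LY = Y" "set LW = W" using fin by (auto simp: LZ_def LY_def LW_def)
  have dist: "distinct L" using d sets by (auto simp: L_def LZ_def LY_def LW_def)
  have setL: "set L = {..<m}" using u sets by (auto simp: L_def)
  have lenL: "length L = m" using distinct_card[OF dist] setL by simp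
  have bij: "bij_betw ((!) L) {..<m} (set L)" using dist lenL by (intro bij_betw_nth) auto
  define r where "r = the_inv_into {..<m} ((!) L)"
  have vo: "var_order m r" unfolding var_order_def r_def using bij_betw_the_inv_into[OF bij] setL by simp
  have pos: "r v < m \<and> L ! (r v) = v" if "v \<in> {..<m}" for v
  proof -
    have "v \<in> (!) L ` {..<m}" using bij that setL by (simp add: bij_betw_def)
    then obtain i where i: "i < m" "v = L ! i" by auto
    have "r v = i" using i bij by (simp add: r_def bij_betw_def the_inv_into_f_f)
    then show ?thesis using i by simp
  qed
  have cls: "i < m \<Longrightarrow> (i < length LZ \<and> L!i \<in> Z) \<or> (length LZ \<le> i \<and> i < length LZ + length LY \<and> L!i \<in> Y)
       \<or> (length LZ + length LY \<le> i \<and> L!i \<in> W)" for i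
    using lenL sets by (auto simp: L_def nth_append)
  have inZ: "r z < length LZ" if "z \<in> Z" for z
  proof -
    have vm: "z \<in> {..<m}" using u that by blast
    from pos[OF vm] have p: "r z < m" "L ! r z = z" by auto
    show ?thesis using cls[OF p(1)] p(2) that d by (metis IntI empty_iff)
  qed
  have inY: "length LZ \<le> r y \<and> r y < length LZ + length LY" if "y \<in> Y" for y
  proof -
    have vm: "y \<in> {..<m}" using u that by blast
    from pos[OF vm] have p: "r y < m" "L ! r y = y" by auto
    show ?thesis using cls[OF p(1)] p(2) that d by (metis IntI empty_iff)
  qed
  have inW: "length LZ + length LY \<le> r w" if "w \<in> W" for w
  proof -
    have vm: "w \<in> {..<m}" using u that by blast
    from pos[OF vm] have p: "r w < m" "L ! r w = w" by auto
    show ?thesis using cls[OF p(1)] p(2) that d by (metis IntI empty_iff)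
  qed
  have a1: "\<forall>z\<in>Z. \<forall>y\<in>Y. r z < r y" using inZ inY by (meson less_le_trans)
  have a2: "\<forall>y\<in>Y. \<forall>w\<in>W. r y < r w" using inY inW by (meson less_le_trans)
  have a3: "\<forall>z\<in>Z. \<forall>w\<in>W. r z < r w" using inZ inW by (meson less_le_trans le_add1)
  show ?thesis using vo a1 a2 a3 by blast
qed

theorem mainTheorem16:
  assumes "gcd_to_div \<Psi> u E d m Z Y W"
  shows "(\<not> increasing \<Psi> m \<longrightarrow>
            (\<exists>f l r. (l, r) \<in> set \<Psi> \<and> primitive_part_of f l \<and> lvars f \<noteq> {} \<and>
                     (\<exists>c. c \<noteq> 0 \<and> lin_const c \<in> Mset \<Psi> f)))
       \<and> (increasing \<Psi> m \<longrightarrow>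
            (\<forall>r. var_order m r \<and>
                 (\<forall>z \<in> Z. \<forall>y \<in> Y. r z < r y) \<and>
                 (\<forall>y \<in> Y. \<forall>w \<in> W. r y < r w) \<and>
                 (\<forall>z \<in> Z. \<forall>w \<in> W. r z < r w)
                 \<longrightarrow> increasing_for \<Psi> m r))"
proof -
  have d: "Z \<inter> Y = {}" "Z \<inter> W = {}" "Y \<inter> W = {}" "Z \<union> Y \<union> W = {..<m}"
    using assms by (auto simp: gcd_to_div_def)
  have 1: "\<not> increasing \<Psi> m \<longrightarrow> Cprop \<Psi>"
  proof (intro impI, rule ccontr)
    assume ni: "\<not> increasing \<Psi> m" and nc: "\<not> Cprop \<Psi>"
    obtain r where "var_order m r \<and> (\<forall>z\<in>Z. \<forall>y\<in>Y. r z < r y) \<and> (\<forall>y\<in>Y. \<forall>w\<in>W. r y < r w)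
           \<and> (\<forall>z\<in>Z. \<forall>w\<in>W. r z < r w)" using order_exists[OF d] by blast
    then have "increasing \<Psi> m" using L2[OF assms nc] by (auto simp: increasing_def)
    then show False using ni by simp
  qed
  have 2: "increasing \<Psi> m \<longrightarrow>
            (\<forall>r. var_order m r \<and>
                 (\<forall>z \<in> Z. \<forall>y \<in> Y. r z < r y) \<and>
                 (\<forall>y \<in> Y. \<forall>w \<in> W. r y < r w) \<and>
                 (\<forall>z \<in> Z. \<forall>w \<in> W. r z < r w)
                 \<longrightarrow> increasing_for \<Psi> m r)"
  proof (intro impI allI)
    fix r assume i: "increasing \<Psi> m" and h: "var_order m r \<and>
                 (\<forall>z \<in> Z. \<forall>y \<in> Y. r z < r y) \<and>
                 (\<forall>y \<in> Y. \<forall>w \<in> W. r y < r w) \<and>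
                 (\<forall>z \<in> Z. \<forall>w \<in> W. r z < r w)"
    have nc: "\<not> Cprop \<Psi>" by (rule L1[OF assms i])
    show "increasing_for \<Psi> m r" using L2[OF assms nc] h by blast
  qed
  show ?thesis using 1 2 unfolding Cprop_def by (intro conjI) auto
qed

end
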